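(* Consider an instance of the MSSN-MC-HC problem with $m=|Q|$ sources and costs $c_s>0$, $c_r>0$, and suppose $\frac{c_s}{c_r}\ge \overline{m}(\overline{m}+1)(h_{\max}-1)$ for some integer $\overline{m}$ with $1\le \overline{m}<m$. Consider any iteration $j$ of the greedy phase of SmartSelect at which the number $u$ of uncovered sources satisfies $u>\overline{m}$. Suppose $b_1,b_2\in B^{(j)}$ are unpicked sinks such that $Q_1^{(j)}$ equals the set of all currently uncovered sources, and $1\le |Q_2^{(j)}|\le \overline{m}$. Then $C_1^{(j)}\le C_2^{(j)}$, i.e., the algorithm does not favor $b_2$ over $b_1$.
   Context: MSSN-MC-HC problem: given a finite undirected graph $G=(V,E)$ with $V=Q\cup R\cup B$ (pairwise disjoint; $Q$ = sources, $R$ = potential relay locations, $B$ = potential sink locations), costs $c_s$ per sink and $c_r$ per relay, and a positive integer $h_{\max}$, select $B'\subseteq B$, $R'\subseteq R$ such that in the subgraph induced by $Q\cup R'\cup B'$ every source has a path of at most $h_{\max}$ edges to some sink of $B'$, minimizing $c_s|B'|+c_r|R'|$. SmartSelect algorithm: (1) If for some $b\in B$ every source has a path of at most $h_{\max}$ edges to $b$ in the subgraph induced by $Q\cup B$, output $(\{b\},\emptyset)$. (2) If some source has no path of at most $h_{\max}$ edges in $G$ to any sink, declare infeasible. (3) For each $b_i\in B$ let $Q_i$ be the set of sources whose shortest path to $b_i$ in $G$ has at most $h_{\max}$ edges, and $R_i$ the set of relays whose shortest path to $b_i$ has at most $h_{\max}-1$ edges. (4) Greedy phase, iterations $j=0,1,\dots$: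 $B^{(0)}=B$, $Q_i^{(0)}=Q_i$; $B^{(j)}$ is the set of sinks not yet picked and $Q_i^{(j)}$ the set of sources of $Q_i$ not yet covered. In iteration $j$, for each $b_i\in B^{(j)}$, a relay-selection subroutine (e.g. the SPTiRP algorithm) applied to the subgraph of $G$ induced by $Q_i^{(j)}\cup R_i\cup\{b_i\}$ returns a set $\hat R_i^{(j)}\subseteq R_i$ consisting of the relays on one chosen path of at most $h_{\max}$ edges from each source of $Q_i^{(j)}$ to $b_i$ (so every source of $Q_i^{(j)}$ reaches $b_i$ within $h_{\max}$ hops using only $Q_i^{(j)}\cup\hat R_i^{(j)}\cup\{b_i\}$). Let $n_i^{(j)}$ be the number of relays in $\hat R_i^{(j)}$ not selected in earlier iterations (earlier-selected relays have cost zero thereafter), and $C_i^{(j)}=\frac{c_s+c_r n_i^{(j)}}{|Q_i^{(j)}|}$. The sink $b_i$ with least $C_i^{(j)}$ is picked (ties broken in favor of larger $|Q_i^{(j)}|$), its sources $Q_i^{(j)}$ become covered and the relays $\hat R_i^{(j)}$ are selected. Stop when all sources are covered; output the picked sinks and selected relays. *)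

theory Defs
  imports Complex_Main
begin

definition mssn_instance :: "('v \<Rightarrow> 'v \<Rightarrow> bool) \<Rightarrow> 'v set \<Rightarrow> 'v set \<Rightarrow> 'v set \<Rightarrow> bool" where
  "mssn_instance E Q R B \<longleftrightarrow>
     finite (Q \<union> R \<union> B) \<and> Q \<inter> R = {} \<and> Q \<inter> B = {} \<and> R \<inter> B = {} \<and>
     (\<forall>x y. E x y \<longrightarrow> E y x) \<and> (\<forall>x. \<not> E x x) \<and>
     (\<forall>x y. E x y \<longrightarrow> x \<in> Q \<union> R \<union> B \<and> y \<in> Q \<union> R \<union> B)"

text \<open>A (simple) path from s to t in the subgraph induced by W, given as its vertex list;
  its number of edges is length p - 1.\<close>
definition is_path :: "('v \<Rightarrow> 'v \<Rightarrow> bool) \<Rightarrow> 'v set \<Rightarrow> 'v list \<Rightarrow> 'v \<Rightarrow> 'v \<Rightarrow> bool" where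
  "is_path E W p s t \<longleftrightarrow> p \<noteq> [] \<and> hd p = s \<and> last p = t \<and> set p \<subseteq> W \<and> distinct p \<and>
     (\<forall>i. Suc i < length p \<longrightarrow> E (p ! i) (p ! Suc i))"

definition reach_within :: "('v \<Rightarrow> 'v \<Rightarrow> bool) \<Rightarrow> 'v set \<Rightarrow> 'v \<Rightarrow> 'v \<Rightarrow> nat \<Rightarrow> bool" where
  "reach_within E W s t k \<longleftrightarrow> (\<exists>p. is_path E W p s t \<and> length p - 1 \<le> k)"

definition srcs_of :: "('v \<Rightarrow> 'v \<Rightarrow> bool) \<Rightarrow> 'v set \<Rightarrow> 'v set \<Rightarrow> 'v set \<Rightarrow> nat \<Rightarrow> 'v \<Rightarrow> 'v set" where
  "srcs_of E Q R B h b = {q \<in> Q. reach_within E (Q \<union> R \<union> B) q b h}"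

definition rels_of :: "('v \<Rightarrow> 'v \<Rightarrow> bool) \<Rightarrow> 'v set \<Rightarrow> 'v set \<Rightarrow> 'v set \<Rightarrow> nat \<Rightarrow> 'v \<Rightarrow> 'v set" where
  "rels_of E Q R B h b = {r \<in> R. reach_within E (Q \<union> R \<union> B) r b (h - 1)}"

text \<open>Admissible output Rh of the relay-selection subroutine for sink b when U is the set
  of uncovered sources: the relays on one chosen path of at most h edges from each source
  of Q_i \<inter> U to b, inside the subgraph induced by (Q_i \<inter> U) \<union> R_i \<union> {b}.\<close>
definition sub_out :: "('v \<Rightarrow> 'v \<Rightarrow> bool) \<Rightarrow> 'v set \<Rightarrow> 'v set \<Rightarrow> 'v set \<Rightarrow> nat \<Rightarrow> 'v set \<Rightarrow> 'v \<Rightarrow> 'v set \<Rightarrow> bool" where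
  "sub_out E Q R B h U b Rh \<longleftrightarrow>
     (\<exists>P. (\<forall>s \<in> srcs_of E Q R B h b \<inter> U.
             is_path E ((srcs_of E Q R B h b \<inter> U) \<union> rels_of E Q R B h b \<union> {b}) (P s) s b \<and>
             length (P s) - 1 \<le> h) \<and>
          Rh = (\<Union>s \<in> srcs_of E Q R B h b \<inter> U. set (P s) \<inter> R))"

text \<open>C_i^{(j)} = (c_s + c_r n_i^{(j)}) / |Q_i^{(j)}|, where S are the relays selected earlier.\<close>
definition sink_cost :: "('v \<Rightarrow> 'v \<Rightarrow> bool) \<Rightarrow> 'v set \<Rightarrow> 'v set \<Rightarrow> 'v set \<Rightarrow> nat \<Rightarrow> real \<Rightarrow> real \<Rightarrow>
    'v set \<Rightarrow> 'v set \<Rightarrow> 'v \<Rightarrow> 'v set \<Rightarrow> real" where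
  "sink_cost E Q R B h cs cr U S b Rh =
     (cs + cr * real (card (Rh - S))) / real (card (srcs_of E Q R B h b \<inter> U))"

definition step1_applies :: "('v \<Rightarrow> 'v \<Rightarrow> bool) \<Rightarrow> 'v set \<Rightarrow> 'v set \<Rightarrow> 'v set \<Rightarrow> nat \<Rightarrow> bool" where
  "step1_applies E Q R B h \<longleftrightarrow> (\<exists>b \<in> B. \<forall>q \<in> Q. reach_within E (Q \<union> B) q b h)"

definition feasible :: "('v \<Rightarrow> 'v \<Rightarrow> bool) \<Rightarrow> 'v set \<Rightarrow> 'v set \<Rightarrow> 'v set \<Rightarrow> nat \<Rightarrow> bool" where
  "feasible E Q R B h \<longleftrightarrow> (\<forall>q \<in> Q. \<exists>b \<in> B. reach_within E (Q \<union> R \<union> B) q b h)"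

text \<open>State (U, S, P): uncovered sources, relays
  selected so far, sinks picked so far. sel gives the subroutine's output for each
  candidate sink (unpicked sinks that can still cover some uncovered source).\<close>
inductive greedy_step :: "('v \<Rightarrow> 'v \<Rightarrow> bool) \<Rightarrow> 'v set \<Rightarrow> 'v set \<Rightarrow> 'v set \<Rightarrow> nat \<Rightarrow> real \<Rightarrow> real \<Rightarrow>
    'v set \<times> 'v set \<times> 'v set \<Rightarrow> 'v set \<times> 'v set \<times> 'v set \<Rightarrow> bool"
  for E Q R B h cs cr where
  "\<lbrakk> U \<noteq> {};
     \<forall>b \<in> B - P. srcs_of E Q R B h b \<inter> U \<noteq> {} \<longrightarrow> sub_out E Q R B h U b (sel b);
     b0 \<in> B - P; srcs_of E Q R B h b0 \<inter> U \<noteq> {};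
     \<forall>b \<in> B - P. srcs_of E Q R B h b \<inter> U \<noteq> {} \<longrightarrow>
        sink_cost E Q R B h cs cr U S b0 (sel b0) \<le> sink_cost E Q R B h cs cr U S b (sel b) \<and>
        (sink_cost E Q R B h cs cr U S b0 (sel b0) = sink_cost E Q R B h cs cr U S b (sel b) \<longrightarrow>
           card (srcs_of E Q R B h b \<inter> U) \<le> card (srcs_of E Q R B h b0 \<inter> U)) \<rbrakk>
   \<Longrightarrow> greedy_step E Q R B h cs cr (U, S, P)
         (U - srcs_of E Q R B h b0, S \<union> sel b0, insert b0 P)"

end

theory Submission
  imports Defs
begin

lemma path_relays:
  assumes "is_path E W p s t" "length p - 1 \<le> h" "s \<notin> R" "t \<notin> R" "s \<noteq> t"
  shows "card (set p \<inter> R) \<le> h - 1"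
proof -
  have d: "distinct p" and hs: "s \<in> set p" and ht: "t \<in> set p"
    using assms(1) unfolding is_path_def by (auto intro: hd_in_set last_in_set)
  have "set p \<inter> R \<subseteq> set p - {s,t}" using assms by auto
  hence "card (set p \<inter> R) \<le> card (set p - {s,t})" by (intro card_mono) auto
  also have "\<dots> = length p - 2" using d hs ht assms(5)
    by (simp add: card_Diff_subset distinct_card)
  finally show ?thesis using assms(2) by linarith
qed

lemma real_ineq:
  fixes cs cr n1 n2 u q m hh :: real
  assumes "cs > 0" "cr > 0" "n1 \<le> u * hh" "n2 \<ge> 0" "1 \<le> q" "q \<le> m" "m + 1 \<le> u"
    "cs \<ge> cr * (m * (m + 1) * hh)" "hh \<ge> 0" "m \<ge> 1"
  shows "(cs + cr * n1) / u \<le> (cs + cr * n2) / q"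
proof -
  have u0: "u > 0" using assms by linarith
  have a0: "m*(u-m-1) \<ge> 0" using assms by simp
  have a: "(m+1)*(u-m) \<ge> u" using a0 by (simp add: algebra_simps)
  have b: "cs*(u-m) \<ge> cr * (m*hh*u)"
  proof -
    have "cr*(m*hh)*u \<le> cr*(m*hh)*((m+1)*(u-m))" using a assms by (intro mult_left_mono) auto
    also have "\<dots> = cr * (m*(m+1)*hh) * (u-m)" by (simp add: algebra_simps)
    also have "\<dots> \<le> cs*(u-m)" using assms by (intro mult_right_mono) auto
    finally show ?thesis by (simp add: algebra_simps)
  qed
  have c: "cr*n1*q \<le> cr*(u*hh)*m"
  proof -
    have "cr*n1*q \<le> cr*(u*hh)*q" using assms by (intro mult_right_mono mult_left_mono) auto
    also have "\<dots> \<le> cr*(u*hh)*m" using assms u0 by (intro mult_left_mono) auto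
    finally show ?thesis .
  qed
  have "(cs + cr*n1)*q \<le> cs*u"
  proof -
    have "(cs + cr*n1)*q = cs*q + cr*n1*q" by (simp add: algebra_simps)
    also have "\<dots> \<le> cs*m + cr*(u*hh)*m" using c assms mult_left_mono[of q m cs] by linarith
    also have "\<dots> \<le> cs*u" using b by (simp add: algebra_simps)
    finally show ?thesis .
  qed
  also have "\<dots> \<le> (cs + cr*n2)*u" using assms u0 by simp
  finally have "(cs + cr*n1)*q \<le> (cs + cr*n2)*u" .
  thus ?thesis using u0 assms by (simp add: divide_simps mult.commute)
qed

theorem lemma1:
  fixes E :: "'v \<Rightarrow> 'v \<Rightarrow> bool" and Q R B U S P Rh1 Rh2 :: "'v set"
    and h mbar :: nat and cs cr :: real and b1 b2 :: 'v
  assumes inst: "mssn_instance E Q R B"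
    and h: "1 \<le> h"
    and cs: "cs > 0" and cr: "cr > 0"
    and mbar: "1 \<le> mbar" "mbar < card Q"
    and ratio: "cs / cr \<ge> real mbar * (real mbar + 1) * (real h - 1)"
    and not1: "\<not> step1_applies E Q R B h"
    and feas: "feasible E Q R B h"
    and reach: "(greedy_step E Q R B h cs cr)\<^sup>*\<^sup>* (Q, {}, {}) (U, S, P)"
    and u: "card U > mbar"
    and b1: "b1 \<in> B - P" and b2: "b2 \<in> B - P"
    and Q1: "srcs_of E Q R B h b1 \<inter> U = U"
    and Q2: "1 \<le> card (srcs_of E Q R B h b2 \<inter> U)" "card (srcs_of E Q R B h b2 \<inter> U) \<le> mbar"
    and R1: "sub_out E Q R B h U b1 Rh1" and R2: "sub_out E Q R B h U b2 Rh2"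
  shows "sink_cost E Q R B h cs cr U S b1 Rh1 \<le> sink_cost E Q R B h cs cr U S b2 Rh2"
proof -
  have fU: "finite U" using u card.infinite by fastforce
  obtain Pf where Pf: "\<forall>s \<in> srcs_of E Q R B h b1 \<inter> U.
      is_path E ((srcs_of E Q R B h b1 \<inter> U) \<union> rels_of E Q R B h b1 \<union> {b1}) (Pf s) s b1 \<and>
      length (Pf s) - 1 \<le> h"
    and Rh1: "Rh1 = (\<Union>s \<in> srcs_of E Q R B h b1 \<inter> U. set (Pf s) \<inter> R)"
    using R1 unfolding sub_out_def by blast
  have disj: "Q \<inter> R = {}" "Q \<inter> B = {}" "R \<inter> B = {}" using inst unfolding mssn_instance_def by auto
  have each: "card (set (Pf s) \<inter> R) \<le> h - 1" if "s \<in> U" for s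
  proof -
    have sQ: "s \<in> Q" using that Q1 unfolding srcs_of_def by auto
    have b1B: "b1 \<in> B" using b1 by auto
    show ?thesis
      by (rule path_relays[of E _ _ s b1]) (use Pf Q1 that sQ b1B disj in auto)
  qed
  have "card Rh1 \<le> (\<Sum>s\<in>U. card (set (Pf s) \<inter> R))"
    unfolding Rh1 Q1 using fU by (rule card_UN_le)
  also have "\<dots> \<le> card U * (h - 1)" using each sum_bounded_above[of U "\<lambda>s. card (set (Pf s) \<inter> R)" "h-1"] by auto
  finally have n1: "card Rh1 \<le> card U * (h - 1)" .
  have fR: "finite Rh1" unfolding Rh1 Q1 using fU by auto
  have "card (Rh1 - S) \<le> card Rh1" using fR by (rule card_mono) auto
  with n1 have n1': "real (card (Rh1 - S)) \<le> real (card U) * (real h - 1)"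
  proof -
    have "card (Rh1 - S) \<le> card U * (h - 1)" using n1 \<open>card (Rh1 - S) \<le> card Rh1\<close> by linarith
    hence "real (card (Rh1 - S)) \<le> real (card U * (h - 1))" by linarith
    thus ?thesis using h by (simp add: of_nat_diff)
  qed
  have ratio': "cs \<ge> cr * (real mbar * (real mbar + 1) * (real h - 1))"
    using ratio cr by (simp add: pos_le_divide_eq mult.commute)
  show ?thesis unfolding sink_cost_def Q1
    apply (rule real_ineq[where m="real mbar" and hh="real h - 1"])
    using cs cr n1' Q2 u mbar h ratio' by auto
qed

end
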